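(* Let $\mathsf{X}=\mathsf{Y}=\mathbb{R}^d$ with probability measures $\mu,\nu$ and cost $c(x,y)=\|x-y\|^2$, let $\pi_\varepsilon$ be the $(c,\varepsilon)$-cyclically invariant coupling for each $\varepsilon>0$ (assumed to exist), and assume $\pi_\varepsilon\to\pi_*$ weakly as $\varepsilon\to0$ for some $\pi_*\in\Pi(\mu,\nu)$. Let $\Gamma:=\operatorname{spt}\pi_*$, $\mathsf{X}_0:=\operatorname{proj}_{\mathsf{X}}\Gamma$, $\mathsf{Y}_0:=\operatorname{proj}_{\mathsf{Y}}\Gamma$. Assume there exists a Kantorovich potential $\psi$ such that $I(x,y)=c(x,y)-\psi^c(y)+\psi(x)$ for all $(x,y)\in\mathsf{X}_0\times\mathsf{Y}_0$. Let $\mathsf{X}_0$ be strictly convex and consider $(x,y)\in(\mathsf{X}_0\times\mathsf{Y}_0)\setminus\Gamma$ with $x\in\partial\mathsf{X}_0$. Suppose that $I(\tilde x,y)>0$ for all $\tilde x\in\operatorname{Int}\mathsf{X}_0\cap B_r(x)$, for some $r>0$. Then $I(x,y)>0$.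
   Context: $\mathsf{X}_0$ is strictly convex if for distinct $x,x'\in\mathsf{X}_0$ the open segment $(x,x')$ lies in $\operatorname{Int}\mathsf{X}_0$. $\Pi(\mu,\nu)$ is the set of couplings and $P:=\mu\otimes\nu$. A coupling $\pi$ is $(c,\varepsilon)$-cyclically invariant if $\pi\sim P$ and its density admits a version $\frac{d\pi}{dP}:\mathsf{X}\times\mathsf{Y}\to(0,\infty)$ with $\prod_{i=1}^k\frac{d\pi}{dP}(x_i,y_i)=\exp\big(-\frac1\varepsilon[\sum_{i=1}^k c(x_i,y_i)-\sum_{i=1}^k c(x_i,y_{i+1})]\big)\prod_{i=1}^k\frac{d\pi}{dP}(x_i,y_{i+1})$ for all $k$ and points, $y_{k+1}:=y_1$. A proper $\psi:\mathsf{X}\to(-\infty,\infty]$ is $c$-convex if $\psi(x)=\sup_y[\zeta(y)-c(x,y)]$ for some $\zeta:\mathsf{Y}\to[-\infty,\infty]$; $\psi^c(y):=\inf_x[\psi(x)+c(x,y)]$; $\partial_c\psi=\{(x,y):\psi^c(y)-\psi(x)=c(x,y)\}$; a Kantorovich potential is a $c$-convex $\psi$ with $\Gamma\subset\partial_c\psi$. The function $I$ is $I(x,y):=\sup_{k\ge2}\sup_{(x_i,y_i)_{i=2}^k\subset\Gamma}\sup_{\sigma\in\Sigma(k)}\sum_{i=1}^k c(x_i,y_i)-\sum_{i=1}^k c(x_i,y_{\sigma(i)})$ with $(x_1,y_1):=(x,y)$ and $\Sigma(k)$ the permutations of $\{1,\dots,k\}$. *)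

theory Defs
  imports "HOL-Probability.Probability"
begin

definition ot_coupling :: "'a::euclidean_space measure \<Rightarrow> 'b::euclidean_space measure
    \<Rightarrow> ('a \<times> 'b) measure \<Rightarrow> bool" where
  "ot_coupling \<mu> \<nu> \<pi> \<longleftrightarrow> prob_space \<pi> \<and> sets \<pi> = sets borel \<and>
     distr \<pi> borel fst = \<mu> \<and> distr \<pi> borel snd = \<nu>"

definition ot_cyc_invariant :: "('a \<Rightarrow> 'b \<Rightarrow> real) \<Rightarrow> real \<Rightarrow> 'a::euclidean_space measure
    \<Rightarrow> 'b::euclidean_space measure \<Rightarrow> ('a \<times> 'b) measure \<Rightarrow> bool" where
  "ot_cyc_invariant c \<epsilon> \<mu> \<nu> \<pi> \<longleftrightarrow>
     ot_coupling \<mu> \<nu> \<pi> \<and>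
     absolutely_continuous (\<mu> \<Otimes>\<^sub>M \<nu>) \<pi> \<and> absolutely_continuous \<pi> (\<mu> \<Otimes>\<^sub>M \<nu>) \<and>
     (\<exists>f :: 'a \<times> 'b \<Rightarrow> real. f \<in> borel_measurable borel \<and> (\<forall>z. f z > 0) \<and>
        \<pi> = density (\<mu> \<Otimes>\<^sub>M \<nu>) (\<lambda>z. ennreal (f z)) \<and>
        (\<forall>k::nat. \<forall>xs ys. k \<ge> 1 \<longrightarrow>
           (\<Prod>i<k. f (xs i, ys i)) =
             exp (- (1/\<epsilon>) * ((\<Sum>i<k. c (xs i) (ys i)) - (\<Sum>i<k. c (xs i) (ys ((i+1) mod k)))))
             * (\<Prod>i<k. f (xs i, ys ((i+1) mod k)))))"

definition ot_weak_conv_at0 :: "(real \<Rightarrow> ('c::topological_space) measure) \<Rightarrow> 'c measure \<Rightarrow> bool" where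
  "ot_weak_conv_at0 P Q \<longleftrightarrow>
     (\<forall>g :: 'c \<Rightarrow> real. continuous_on UNIV g \<longrightarrow> bounded (range g) \<longrightarrow>
        ((\<lambda>\<epsilon>. integral\<^sup>L (P \<epsilon>) g) \<longlongrightarrow> integral\<^sup>L Q g) (at_right 0))"

definition ot_support :: "('c::topological_space) measure \<Rightarrow> 'c set" where
  "ot_support M = {z. \<forall>U. open U \<longrightarrow> z \<in> U \<longrightarrow> emeasure M U > 0}"

definition ot_proper :: "('a \<Rightarrow> ereal) \<Rightarrow> bool" where
  "ot_proper \<psi> \<longleftrightarrow> (\<forall>x. \<psi> x \<noteq> -\<infinity>) \<and> (\<exists>x. \<psi> x \<noteq> \<infinity>)"

definition ot_c_convex :: "('a \<Rightarrow> 'b \<Rightarrow> real) \<Rightarrow> ('a \<Rightarrow> ereal) \<Rightarrow> bool" where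
  "ot_c_convex c \<psi> \<longleftrightarrow> ot_proper \<psi> \<and>
     (\<exists>\<zeta> :: 'b \<Rightarrow> ereal. \<forall>x. \<psi> x = (SUP y. \<zeta> y - ereal (c x y)))"

definition ot_c_transform :: "('a \<Rightarrow> 'b \<Rightarrow> real) \<Rightarrow> ('a \<Rightarrow> ereal) \<Rightarrow> 'b \<Rightarrow> ereal" where
  "ot_c_transform c \<psi> y = (INF x. \<psi> x + ereal (c x y))"

definition ot_c_subdiff :: "('a \<Rightarrow> 'b \<Rightarrow> real) \<Rightarrow> ('a \<Rightarrow> ereal) \<Rightarrow> ('a \<times> 'b) set" where
  "ot_c_subdiff c \<psi> = {(x, y). ot_c_transform c \<psi> y - \<psi> x = ereal (c x y)}"

definition ot_kantorovich_potential :: "('a \<Rightarrow> 'b \<Rightarrow> real) \<Rightarrow> ('a \<times> 'b) set \<Rightarrow> ('a \<Rightarrow> ereal) \<Rightarrow> bool" where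
  "ot_kantorovich_potential c \<Gamma> \<psi> \<longleftrightarrow> ot_c_convex c \<psi> \<and> \<Gamma> \<subseteq> ot_c_subdiff c \<psi>"

definition ot_I :: "('a \<Rightarrow> 'b \<Rightarrow> real) \<Rightarrow> ('a \<times> 'b) set \<Rightarrow> 'a \<Rightarrow> 'b \<Rightarrow> ereal" where
  "ot_I c \<Gamma> x y = (SUP t \<in> {(k, xs, ys, \<sigma>). k \<ge> (2::nat) \<and> xs 1 = x \<and> ys 1 = y \<and>
        (\<forall>i\<in>{2..k}. (xs i, ys i) \<in> \<Gamma>) \<and> \<sigma> permutes {1..k}}.
      (case t of (k, xs, ys, \<sigma>) \<Rightarrow>
        ereal ((\<Sum>i=1..k. c (xs i) (ys i)) - (\<Sum>i=1..k. c (xs i) (ys (\<sigma> i))))))"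

definition ot_strictly_convex :: "('a::real_normed_vector) set \<Rightarrow> bool" where
  "ot_strictly_convex S \<longleftrightarrow> (\<forall>x\<in>S. \<forall>x'\<in>S. x \<noteq> x' \<longrightarrow> open_segment x x' \<subseteq> interior S)"

end

theory Submission
  imports Defs
begin

lemma sq_affine:
  fixes x x0 y y' :: "'a::real_inner"
  shows "(norm ((1-t) *\<^sub>R x + t *\<^sub>R x0 - y))\<^sup>2 - (norm ((1-t) *\<^sub>R x + t *\<^sub>R x0 - y'))\<^sup>2
       = (1-t) * ((norm (x - y))\<^sup>2 - (norm (x - y'))\<^sup>2) + t * ((norm (x0 - y))\<^sup>2 - (norm (x0 - y'))\<^sup>2)"
  by (simp add: power2_norm_eq_inner inner_diff_left inner_diff_right inner_add_left
      inner_add_right inner_commute algebra_simps)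

theorem lemma5p4:
  fixes \<mu> \<nu> :: "'a::euclidean_space measure"
    and \<pi>\<epsilon> :: "real \<Rightarrow> ('a \<times> 'a) measure"
    and \<pi>s :: "('a \<times> 'a) measure"
    and c :: "'a \<Rightarrow> 'a \<Rightarrow> real"
    and \<psi> :: "'a \<Rightarrow> ereal"
    and x y :: 'a and r :: real
  assumes c_def: "c = (\<lambda>x y. (norm (x - y))\<^sup>2)"
    and \<mu>: "prob_space \<mu>" "sets \<mu> = sets borel"
    and \<nu>: "prob_space \<nu>" "sets \<nu> = sets borel"
    and cyc: "\<And>\<epsilon>. \<epsilon> > 0 \<Longrightarrow> ot_cyc_invariant c \<epsilon> \<mu> \<nu> (\<pi>\<epsilon> \<epsilon>)"
    and lim_coupling: "ot_coupling \<mu> \<nu> \<pi>s"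
    and weak: "ot_weak_conv_at0 \<pi>\<epsilon> \<pi>s"
    and pot: "ot_kantorovich_potential c (ot_support \<pi>s) \<psi>"
    and I_eq: "\<And>x' y'. x' \<in> fst ` ot_support \<pi>s \<Longrightarrow> y' \<in> snd ` ot_support \<pi>s \<Longrightarrow>
         ot_I c (ot_support \<pi>s) x' y' = ereal (c x' y') - ot_c_transform c \<psi> y' + \<psi> x'"
    and strict: "ot_strictly_convex (fst ` ot_support \<pi>s)"
    and xy: "(x, y) \<in> (fst ` ot_support \<pi>s \<times> snd ` ot_support \<pi>s) - ot_support \<pi>s"
    and bdry: "x \<in> frontier (fst ` ot_support \<pi>s)"
    and r: "r > 0"
    and near: "\<And>x'. x' \<in> interior (fst ` ot_support \<pi>s) \<inter> ball x r \<Longrightarrow>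
         ot_I c (ot_support \<pi>s) x' y > 0"
  shows "ot_I c (ot_support \<pi>s) x y > 0"
proof (rule ccontr)
  assume neg: "\<not> ot_I c (ot_support \<pi>s) x y > 0"
  define S where "S = ot_support \<pi>s"
  have xX: "x \<in> fst ` S" and yY: "y \<in> snd ` S" and nS: "(x, y) \<notin> S"
    using xy unfolding S_def by auto
  obtain x0 where x0S: "(x0, y) \<in> S" using yY by force
  have x0X: "x0 \<in> fst ` S" using x0S by force
  have xne: "x \<noteq> x0" using x0S nS by auto
  have proper: "\<And>z. \<psi> z \<noteq> -\<infinity>" using pot
    unfolding ot_kantorovich_potential_def ot_c_convex_def ot_proper_def by blast
  obtain \<zeta> :: "'a \<Rightarrow> ereal" where zeta: "\<And>z. \<psi> z = (SUP y'. \<zeta> y' - ereal (c z y'))"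
    using pot unfolding ot_kantorovich_potential_def ot_c_convex_def by blast
  define T where "T = ot_c_transform c \<psi> y"
  have sub: "T - \<psi> x0 = ereal (c x0 y)"
    using pot x0S unfolding ot_kantorovich_potential_def ot_c_subdiff_def T_def S_def by auto
  obtain p where p: "\<psi> x0 = ereal p"
  proof (cases "\<psi> x0")
    case (real r) then show ?thesis using that by blast
  next
    case PInf then show ?thesis using sub by (cases T) auto
  next
    case MInf then show ?thesis using proper by blast
  qed
  define m where "m = c x0 y + p"
  have Tm: "T = ereal m" using sub p unfolding m_def by (cases T) auto
  have Ile: "ot_I c S x y \<le> 0" using neg S_def by auto
  have Ix: "ot_I c S x y = ereal (c x y) - ereal m + \<psi> x"
    using I_eq[OF xX[unfolded S_def] yY[unfolded S_def]] Tm unfolding S_def T_def by simp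
  obtain q where q: "\<psi> x = ereal q" and qle: "c x y - m + q \<le> 0"
  proof (cases "\<psi> x")
    case (real r) then show ?thesis using that Ile Ix by auto
  next
    case PInf then show ?thesis using Ile Ix by auto
  next
    case MInf then show ?thesis using proper by blast
  qed
  have bx: "\<And>y'. \<zeta> y' - ereal (c x y') \<le> ereal q"
    using zeta[of x] q by (metis SUP_upper UNIV_I)
  have bx0: "\<And>y'. \<zeta> y' - ereal (c x0 y') \<le> ereal p"
    using zeta[of x0] p by (metis SUP_upper UNIV_I)
  have key: "\<psi> ((1-t) *\<^sub>R x + t *\<^sub>R x0) \<le> ereal (m - c ((1-t) *\<^sub>R x + t *\<^sub>R x0) y)"
    if t: "0 \<le> t" "t \<le> 1" for t
  proof -
    define z where "z = (1-t) *\<^sub>R x + t *\<^sub>R x0"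
    have "\<zeta> y' - ereal (c z y') \<le> ereal (m - c z y)" for y'
    proof (cases "\<zeta> y'")
      case (real a)
      have h1: "a - c x y' \<le> q" using bx[of y'] real by simp
      have h2: "a - c x0 y' \<le> p" using bx0[of y'] real by simp
      have aff: "c z y - c z y' = (1-t) * (c x y - c x y') + t * (c x0 y - c x0 y')"
        unfolding z_def c_def by (rule sq_affine)
      have "(1-t) * (a - c x y' + c x y - m) \<le> 0"
        using h1 qle t by (intro mult_nonneg_nonpos) auto
      moreover have "t * (a - c x0 y' + c x0 y - m) \<le> 0"
        using h2 t unfolding m_def by (intro mult_nonneg_nonpos) auto
      ultimately have "a - c z y' \<le> m - c z y" using aff by (simp add: algebra_simps)
      then show ?thesis using real by simp
    next
      case PInf then show ?thesis using bx[of y'] by simp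
    next
      case MInf then show ?thesis by simp
    qed
    then show ?thesis unfolding zeta[of "(1-t) *\<^sub>R x + t *\<^sub>R x0"] z_def
      by (rule SUP_least)
  qed
  define t where "t = min (1/2) (r / (2 * norm (x0 - x)))"
  have npos: "norm (x0 - x) > 0" using xne by simp
  have t0: "t > 0" using r npos unfolding t_def by simp
  have t1: "t < 1" unfolding t_def by simp
  define z where "z = (1-t) *\<^sub>R x + t *\<^sub>R x0"
  have zseg: "z \<in> open_segment x x0"
    unfolding in_segment(2) z_def using xne t0 t1 by blast
  have zint: "z \<in> interior (fst ` S)"
    using strict[folded S_def] xX x0X xne zseg unfolding ot_strictly_convex_def by blast
  have "z - x = t *\<^sub>R (x0 - x)" unfolding z_def by (simp add: algebra_simps)
  then have "dist x z = norm (t *\<^sub>R (x0 - x))" by (metis dist_commute dist_norm)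
  also have "\<dots> = t * norm (x0 - x)" using t0 by simp
  also have "\<dots> \<le> (r / (2 * norm (x0 - x))) * norm (x0 - x)"
    using npos unfolding t_def by (intro mult_right_mono) auto
  also have "\<dots> = r / 2" using npos by simp
  also have "\<dots> < r" using r by simp
  finally have zball: "z \<in> ball x r" by simp
  have zX: "z \<in> fst ` S" using zint interior_subset by blast
  have kz: "\<psi> z \<le> ereal (m - c z y)" using key[of t] t0 t1 unfolding z_def by simp
  obtain w where w: "\<psi> z = ereal w" "w \<le> m - c z y"
  proof (cases "\<psi> z")
    case (real r) then show ?thesis using that kz by auto
  next
    case PInf then show ?thesis using kz by simp
  next
    case MInf then show ?thesis using proper by blast
  qed
  have "ot_I c S z y = ereal (c z y) - ereal m + \<psi> z"
    using I_eq[OF zX[unfolded S_def] yY[unfolded S_def]] Tm unfolding S_def T_def by simp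
  then have "ot_I c S z y \<le> 0" using w by simp
  moreover have "ot_I c S z y > 0" using near zint zball unfolding S_def by blast
  ultimately show False by simp
qed

end
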